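(* Let $A=\mathbb{C}[x,y,z]$ and let $B$ be $A$, or its quotient field $Q(A)$, or the $M$-adic completion $\widehat A$ of $A$ at a maximal ideal $M$. Let $a,b,c\in B$. Then $c\,\mathrm{grad}(a)$ and $\mathrm{grad}(b)$ are compatible if and only if $\det\mathrm{Jac}(a,b,c)=0$.
   Context: $\mathrm{grad}(a)=(a_x,a_y,a_z)$ (partial derivatives, extended to $Q(A)$ by the quotient rule and to $\widehat A$ by continuity), $\mathrm{Jac}(f,g,h)$ is the matrix with rows $\mathrm{grad}(f),\mathrm{grad}(g),\mathrm{grad}(h)$. $F=(f,g,h)\in B^3$ is a Poisson triple on $B$ if there is a Poisson bracket on $B$ with $\{y,z\}=f$, $\{z,x\}=g$, $\{x,y\}=h$; two Poisson triples $F,G$ are compatible if $\lambda F+\mu G$ is a Poisson triple on $B$ for all $\lambda,\mu\in\mathbb{C}$. *)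

theory Defs
  imports Complex_Main "HOL-Computational_Algebra.Polynomial" "HOL-Computational_Algebra.Fraction_Field"
    "HOL-Computational_Algebra.Formal_Power_Series"
begin

text \<open>B is a commutative ring, with the C-algebra structure given by an embedding
  emb of the constants, and distinguished coordinate elements x, y, z.\<close>

definition is_poisson_bracket :: "(complex \<Rightarrow> 'b::comm_ring_1) \<Rightarrow> ('b \<Rightarrow> 'b \<Rightarrow> 'b) \<Rightarrow> bool" where
  "is_poisson_bracket emb P \<longleftrightarrow>
     (\<forall>a b c. P (a + b) c = P a c + P b c) \<and>
     (\<forall>k a b. P (emb k * a) b = emb k * P a b) \<and>
     (\<forall>a b. P a b = - P b a) \<and>
     (\<forall>a b c. P a (b * c) = b * P a c + P a b * c) \<and>
     (\<forall>a b c. P a (P b c) + P b (P c a) + P c (P a b) = 0)"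

definition poisson_triple ::
  "(complex \<Rightarrow> 'b::comm_ring_1) \<Rightarrow> 'b \<Rightarrow> 'b \<Rightarrow> 'b \<Rightarrow> 'b \<times> 'b \<times> 'b \<Rightarrow> bool" where
  "poisson_triple emb x y z F \<longleftrightarrow>
     (\<exists>P. is_poisson_bracket emb P \<and>
          P y z = fst F \<and> P z x = fst (snd F) \<and> P x y = snd (snd F))"

definition triple_lincomb ::
  "(complex \<Rightarrow> 'b::comm_ring_1) \<Rightarrow> complex \<Rightarrow> complex \<Rightarrow> 'b \<times> 'b \<times> 'b \<Rightarrow> 'b \<times> 'b \<times> 'b \<Rightarrow> 'b \<times> 'b \<times> 'b" where
  "triple_lincomb emb l m F G =
     (emb l * fst F + emb m * fst G,
      emb l * fst (snd F) + emb m * fst (snd G),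
      emb l * snd (snd F) + emb m * snd (snd G))"

definition compatible_triples ::
  "(complex \<Rightarrow> 'b::comm_ring_1) \<Rightarrow> 'b \<Rightarrow> 'b \<Rightarrow> 'b \<Rightarrow> 'b \<times> 'b \<times> 'b \<Rightarrow> 'b \<times> 'b \<times> 'b \<Rightarrow> bool" where
  "compatible_triples emb x y z F G \<longleftrightarrow>
     (\<forall>l m. poisson_triple emb x y z (triple_lincomb emb l m F G))"

definition grad3 :: "('b \<Rightarrow> 'b) \<Rightarrow> ('b \<Rightarrow> 'b) \<Rightarrow> ('b \<Rightarrow> 'b) \<Rightarrow> 'b \<Rightarrow> 'b \<times> 'b \<times> 'b" where
  "grad3 dx dy dz a = (dx a, dy a, dz a)"

definition scale_triple :: "'b::times \<Rightarrow> 'b \<times> 'b \<times> 'b \<Rightarrow> 'b \<times> 'b \<times> 'b" where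
  "scale_triple c F = (c * fst F, c * fst (snd F), c * snd (snd F))"

definition det3 :: "'b::comm_ring_1 \<times> 'b \<times> 'b \<Rightarrow> 'b \<times> 'b \<times> 'b \<Rightarrow> 'b \<times> 'b \<times> 'b \<Rightarrow> 'b" where
  "det3 u v w = (case u of (u1, u2, u3) \<Rightarrow> case v of (v1, v2, v3) \<Rightarrow> case w of (w1, w2, w3) \<Rightarrow>
      u1 * (v2 * w3 - v3 * w2) - u2 * (v1 * w3 - v3 * w1) + u3 * (v1 * w2 - v2 * w1))"

definition jac_det :: "('b::comm_ring_1 \<Rightarrow> 'b) \<Rightarrow> ('b \<Rightarrow> 'b) \<Rightarrow> ('b \<Rightarrow> 'b) \<Rightarrow> 'b \<Rightarrow> 'b \<Rightarrow> 'b \<Rightarrow> 'b" where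
  "jac_det dx dy dz a b c = det3 (grad3 dx dy dz a) (grad3 dx dy dz b) (grad3 dx dy dz c)"

section \<open>B = A = C[x,y,z], realised as C[x][y][z]\<close>

type_synonym polyA = "complex poly poly poly"

definition A_const :: "complex \<Rightarrow> polyA" where "A_const k = [:[:[:k:]:]:]"
definition A_x :: polyA where "A_x = [:[:[:0, 1:]:]:]"
definition A_y :: polyA where "A_y = [:[:0, 1:]:]"
definition A_z :: polyA where "A_z = [:0, 1:]"
definition A_dx :: "polyA \<Rightarrow> polyA" where "A_dx = map_poly (map_poly pderiv)"
definition A_dy :: "polyA \<Rightarrow> polyA" where "A_dy = map_poly pderiv"
definition A_dz :: "polyA \<Rightarrow> polyA" where "A_dz = pderiv"

type_synonym fracA = "polyA fract"

definition fract_deriv :: "('a::idom \<Rightarrow> 'a) \<Rightarrow> 'a fract \<Rightarrow> 'a fract" where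
  "fract_deriv d q = (SOME r. \<exists>n m. m \<noteq> 0 \<and> q = Fract n m \<and> r = Fract (d n * m - n * d m) (m * m))"

definition Q_const :: "complex \<Rightarrow> fracA" where "Q_const k = Fract (A_const k) 1"
definition Q_x :: fracA where "Q_x = Fract A_x 1"
definition Q_y :: fracA where "Q_y = Fract A_y 1"
definition Q_z :: fracA where "Q_z = Fract A_z 1"
definition Q_dx :: "fracA \<Rightarrow> fracA" where "Q_dx = fract_deriv A_dx"
definition Q_dy :: "fracA \<Rightarrow> fracA" where "Q_dy = fract_deriv A_dy"
definition Q_dz :: "fracA \<Rightarrow> fracA" where "Q_dz = fract_deriv A_dz"

section \<open>B = completion of A at the maximal ideal M = (x-p, y-q, z-r):
  C[[x-p]][[y-q]][[z-r]] = C[[X,Y,Z]] with x = p + X, y = q + Y, z = r + Z\<close>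

type_synonym serA = "complex fps fps fps"

definition S_const :: "complex \<Rightarrow> serA" where "S_const k = fps_const (fps_const (fps_const k))"
definition S_x :: "complex \<Rightarrow> serA" where "S_x p = fps_const (fps_const (fps_const p + fps_X))"
definition S_y :: "complex \<Rightarrow> serA" where "S_y q = fps_const (fps_const (fps_const q) + fps_X)"
definition S_z :: "complex \<Rightarrow> serA" where "S_z r = S_const r + fps_X"
definition S_dx :: "serA \<Rightarrow> serA" where
  "S_dx f = Abs_fps (\<lambda>n. Abs_fps (\<lambda>m. fps_deriv (fps_nth (fps_nth f n) m)))"
definition S_dy :: "serA \<Rightarrow> serA" where
  "S_dy f = Abs_fps (\<lambda>n. fps_deriv (fps_nth f n))"
definition S_dz :: "serA \<Rightarrow> serA" where "S_dz = fps_deriv"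

end

theory Submission
  imports Defs
begin

unbundle fps_syntax



definition is_der :: "('a::comm_ring_1 \<Rightarrow> 'a) \<Rightarrow> bool" where
  "is_der d \<longleftrightarrow> (\<forall>a b. d (a + b) = d a + d b) \<and> (\<forall>a b. d (a * b) = a * d b + d a * b)"

lemma der_add: "is_der d \<Longrightarrow> d (a + b) = d a + d b" by (simp add: is_der_def)
lemma der_mult: "is_der d \<Longrightarrow> d (a * b) = a * d b + d a * b" by (simp add: is_der_def)
lemma der_0: "is_der d \<Longrightarrow> d 0 = 0" using der_add[of d 0 0] by simp
lemma der_1: "is_der d \<Longrightarrow> d 1 = 0" using der_mult[of d 1 1] by simp
lemma der_minus: "is_der d \<Longrightarrow> d (- a) = - d a"
  using der_add[of d a "-a"] der_0[of d] by (simp add: eq_neg_iff_add_eq_0 add.commute)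
lemma der_diff: "is_der d \<Longrightarrow> d (a - b) = d a - d b"
  using der_add[of d a "-b"] der_minus[of d b] by simp
lemma der_sum: "is_der d \<Longrightarrow> d (sum f S) = (\<Sum>i\<in>S. d (f i))"
  by (induction S rule: infinite_finite_induct) (simp_all add: der_0 der_add)
lemma der_of_nat: "is_der d \<Longrightarrow> d (of_nat n) = 0"
  by (induction n) (simp_all add: der_0 der_1 der_add)
lemma der_of_nat_mult: "is_der d \<Longrightarrow> d (of_nat n * a) = of_nat n * d a"
  by (simp add: der_mult der_of_nat)

lemma der_pderiv: "is_der (pderiv :: 'a::idom poly \<Rightarrow> _)"
  by (simp add: is_der_def pderiv_add pderiv_mult algebra_simps)

lemma der_map_poly: assumes d: "is_der d" shows "is_der (map_poly d)"
  unfolding is_der_def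
proof (intro conjI allI)
  fix a b
  show "map_poly d (a + b) = map_poly d a + map_poly d b"
    by (intro poly_eqI) (simp add: coeff_map_poly der_0[OF d] der_add[OF d])
  show "map_poly d (a * b) = a * map_poly d b + map_poly d a * b"
    by (intro poly_eqI) (simp add: coeff_map_poly der_0[OF d] der_add[OF d] coeff_mult der_sum[OF d]
        der_mult[OF d] sum.distrib)
qed

lemma pderiv_map_poly: assumes d: "is_der d" shows "pderiv (map_poly d p) = map_poly d (pderiv p)"
  by (intro poly_eqI) (simp add: coeff_map_poly der_0[OF d] coeff_pderiv der_of_nat_mult[OF d] del: of_nat_Suc)

definition fmap :: "('a \<Rightarrow> 'a) \<Rightarrow> 'a fps \<Rightarrow> 'a fps" where
  "fmap d f = Abs_fps (\<lambda>n. d (f $ n))"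

lemma fmap_nth[simp]: "fmap d f $ n = d (f $ n)" by (simp add: fmap_def)

lemma der_fps_deriv: "is_der (fps_deriv :: 'a::comm_ring_1 fps \<Rightarrow> _)"
  by (simp add: is_der_def)

lemma der_fmap: assumes d: "is_der d" shows "is_der (fmap d)"
  unfolding is_der_def
proof (intro conjI allI)
  fix a b
  show "fmap d (a + b) = fmap d a + fmap d b"
    by (intro fps_ext) (simp add: der_add[OF d])
  show "fmap d (a * b) = a * fmap d b + fmap d a * b"
    by (intro fps_ext) (simp add: der_add[OF d] fps_mult_nth der_sum[OF d] der_mult[OF d] sum.distrib)
qed

lemma fps_deriv_fmap: assumes d: "is_der d" shows "fps_deriv (fmap d p) = fmap d (fps_deriv p)"
  by (intro fps_ext) (simp add: der_of_nat_mult[OF d] del: of_nat_Suc)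

lemma fmap_fmap: "fmap d1 (fmap d2 f) = fmap (d1 \<circ> d2) f"
  by (intro fps_ext) simp

lemma fmap_const: "is_der d \<Longrightarrow> fmap d (fps_const c) = fps_const (d c)"
  by (intro fps_ext) (simp add: der_0)

lemma fmap_X: "is_der d \<Longrightarrow> fmap d fps_X = 0"
  by (intro fps_ext) (simp add: der_0 der_1 fps_X_def)




locale d3 =
  fixes emb :: "complex \<Rightarrow> 'b::comm_ring_1" and x y z :: 'b and dx dy dz :: "'b \<Rightarrow> 'b"
  assumes emb_add: "emb (k1 + k2) = emb k1 + emb k2"
    and emb_mult: "emb (k1 * k2) = emb k1 * emb k2"
    and emb_one: "emb 1 = 1"
    and dx_add: "dx (a + b) = dx a + dx b"
    and dy_add: "dy (a + b) = dy a + dy b"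
    and dz_add: "dz (a + b) = dz a + dz b"
    and dx_mult: "dx (a * b) = a * dx b + dx a * b"
    and dy_mult: "dy (a * b) = a * dy b + dy a * b"
    and dz_mult: "dz (a * b) = a * dz b + dz a * b"
    and dx_emb: "dx (emb k) = 0" and dy_emb: "dy (emb k) = 0" and dz_emb: "dz (emb k) = 0"
    and dxy: "dy (dx a) = dx (dy a)" and dxz: "dz (dx a) = dx (dz a)" and dyz: "dz (dy a) = dy (dz a)"
    and dxx: "dx x = 1" and dxy0: "dx y = 0" and dxz0: "dx z = 0"
    and dyx0: "dy x = 0" and dyy: "dy y = 1" and dyz0: "dy z = 0"
    and dzx0: "dz x = 0" and dzy0: "dz y = 0" and dzz: "dz z = 1"
    and kill: "\<And>E f. (\<And>a b. E (a + b) = E a + E b) \<Longrightarrow> (\<And>k a. E (emb k * a) = emb k * E a)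
        \<Longrightarrow> (\<And>a b. E (a * b) = a * E b + E a * b) \<Longrightarrow> E x = 0 \<Longrightarrow> E y = 0 \<Longrightarrow> E z = 0 \<Longrightarrow> E f = 0"
begin


lemma d0: "dx 0 = 0" "dy 0 = 0" "dz 0 = 0"
  using dx_add[of 0 0] dy_add[of 0 0] dz_add[of 0 0] by simp_all
lemma dminus: "dx (- a) = - dx a" "dy (- a) = - dy a" "dz (- a) = - dz a"
  using dx_add[of a "-a"] dy_add[of a "-a"] dz_add[of a "-a"] d0
  by (simp_all add: eq_neg_iff_add_eq_0 add.commute)
lemma ddiff: "dx (a - b) = dx a - dx b" "dy (a - b) = dy a - dy b" "dz (a - b) = dz a - dz b"
  using dx_add[of a "-b"] dy_add[of a "-b"] dz_add[of a "-b"] dminus by simp_all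

lemmas dsimps = dx_add dy_add dz_add dx_mult dy_mult dz_mult ddiff dminus d0 dxy dxz dyz dx_emb dy_emb dz_emb

definition br :: "'b \<times> 'b \<times> 'b \<Rightarrow> 'b \<Rightarrow> 'b \<Rightarrow> 'b" where
  "br F u v = fst F * (dy u * dz v - dz u * dy v) + fst (snd F) * (dz u * dx v - dx u * dz v)
     + snd (snd F) * (dx u * dy v - dy u * dx v)"

definition curlc :: "'b \<times> 'b \<times> 'b \<Rightarrow> 'b" where
  "curlc F = fst F * (dy (snd (snd F)) - dz (fst (snd F))) + fst (snd F) * (dz (fst F) - dx (snd (snd F)))
     + snd (snd F) * (dx (fst (snd F)) - dy (fst F))"

lemma jacobi: "br F u (br F v w) + br F v (br F w u) + br F w (br F u v)
   = - curlc F * det3 (grad3 dx dy dz u) (grad3 dx dy dz v) (grad3 dx dy dz w)"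
  apply (cases F)
  apply (simp add: br_def curlc_def det3_def grad3_def dsimps)
  apply (simp add: algebra_simps)
  done


lemma demb: "dx (emb k * a) = emb k * dx a" "dy (emb k * a) = emb k * dy a" "dz (emb k * a) = emb k * dz a"
  by (simp_all add: dx_mult dy_mult dz_mult dx_emb dy_emb dz_emb)

lemma curl_lin: "curlc (triple_lincomb emb l m (scale_triple c (grad3 dx dy dz a)) (grad3 dx dy dz b))
  = emb l * emb m * det3 (grad3 dx dy dz a) (grad3 dx dy dz b) (grad3 dx dy dz c)"
  apply (simp add: curlc_def triple_lincomb_def scale_triple_def grad3_def det3_def dsimps demb)
  apply (simp add: algebra_simps)
  done

lemma br_vals: "br F y z = fst F" "br F z x = fst (snd F)" "br F x y = snd (snd F)"
  by (simp_all add: br_def dxx dxy0 dxz0 dyx0 dyy dyz0 dzx0 dzy0 dzz)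

lemma br_poisson: assumes "curlc F = 0" shows "is_poisson_bracket emb (br F)"
  unfolding is_poisson_bracket_def
proof (intro conjI allI)
  fix a b c
  show "br F (a + b) c = br F a c + br F b c" by (simp add: br_def dsimps algebra_simps)
  show "br F a b = - br F b a" by (simp add: br_def algebra_simps)
  show "br F a (b * c) = b * br F a c + br F a b * c" by (simp add: br_def dsimps algebra_simps)
  show "br F a (br F b c) + br F b (br F c a) + br F c (br F a b) = 0"
    using jacobi[of F a b c] assms by simp
next
  fix k a b
  show "br F (emb k * a) b = emb k * br F a b" by (simp add: br_def dsimps algebra_simps)
qed

lemma chain:
  assumes add: "\<And>a b. D (a + b) = D a + D b" and hom: "\<And>k a. D (emb k * a) = emb k * D a"
    and leib: "\<And>a b. D (a * b) = a * D b + D a * b"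
  shows "D f = D x * dx f + D y * dy f + D z * dz f"
proof -
  let ?E = "\<lambda>f. D f - (D x * dx f + D y * dy f + D z * dz f)"
  have "?E f = 0"
  proof (rule kill[where E = "?E"])
    fix a b
    show "?E (a + b) = ?E a + ?E b" by (simp add: add dsimps algebra_simps)
  next
    fix k a
    show "?E (emb k * a) = emb k * ?E a" using hom[of k a] by (simp add: dsimps algebra_simps)
  next
    fix a b
    show "?E (a * b) = a * ?E b + ?E a * b" by (simp add: leib dsimps algebra_simps)
  qed (simp_all add: dxx dxy0 dxz0 dyx0 dyy dyz0 dzx0 dzy0 dzz)
  then show ?thesis by simp
qed

lemma only_if: assumes "poisson_triple emb x y z F" shows "curlc F = 0"
proof -
  obtain P where P: "is_poisson_bracket emb P" and f: "P y z = fst F" and g: "P z x = fst (snd F)"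
    and h: "P x y = snd (snd F)"
    using assms unfolding poisson_triple_def by blast
  have add1: "\<And>a b c. P (a + b) c = P a c + P b c" and hom1: "\<And>k a b. P (emb k * a) b = emb k * P a b"
    and anti: "\<And>a b. P a b = - P b a" and leib: "\<And>a b c. P a (b * c) = b * P a c + P a b * c"
    and jac: "\<And>a b c. P a (P b c) + P b (P c a) + P c (P a b) = 0"
    using P unfolding is_poisson_bracket_def by blast+
  have add2: "P u (a + b) = P u a + P u b" for u a b
    using anti[of u "a+b"] anti[of u a] anti[of u b] add1[of a b u] by simp
  have hom2: "P u (emb k * a) = emb k * P u a" for u k a
    using anti[of u "emb k * a"] anti[of u a] hom1[of k a u] by simp
  have ch: "P u f = P u x * dx f + P u y * dy f + P u z * dz f" for u f
    using chain[of "P u", OF add2 hom2 leib] .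
  have self: "P u u = 0" for u
  proof -
    have "P u u + P u u = 0" using anti[of u u] by simp
    then have "emb (1/2) * (P u u + P u u) = 0" by simp
    then have "(emb (1/2) + emb (1/2)) * P u u = 0" by (simp add: algebra_simps)
    then show ?thesis by (simp add: emb_add[symmetric] emb_one)
  qed
  have "P x (fst F) + P y (fst (snd F)) + P z (snd (snd F)) = 0"
    using jac[of x y z] f g h by simp
  then have "fst F * (dy (snd (snd F)) - dz (fst (snd F))) + fst (snd F) * (dz (fst F) - dx (snd (snd F)))
     + snd (snd F) * (dx (fst (snd F)) - dy (fst F)) = 0"
    using ch[of x "fst F"] ch[of y "fst (snd F)"] ch[of z "snd (snd F)"] self anti[of x z] anti[of y x] anti[of z y] f g h
    by (simp add: algebra_simps)
  then show ?thesis by (simp add: curlc_def)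
qed

theorem main: "compatible_triples emb x y z (scale_triple c (grad3 dx dy dz a)) (grad3 dx dy dz b)
   \<longleftrightarrow> jac_det dx dy dz a b c = 0"
proof
  assume "compatible_triples emb x y z (scale_triple c (grad3 dx dy dz a)) (grad3 dx dy dz b)"
  then have "poisson_triple emb x y z (triple_lincomb emb 1 1 (scale_triple c (grad3 dx dy dz a)) (grad3 dx dy dz b))"
    unfolding compatible_triples_def by blast
  from only_if[OF this] show "jac_det dx dy dz a b c = 0" by (simp add: curl_lin emb_one jac_det_def)
next
  assume d: "jac_det dx dy dz a b c = 0"
  show "compatible_triples emb x y z (scale_triple c (grad3 dx dy dz a)) (grad3 dx dy dz b)"
    unfolding compatible_triples_def poisson_triple_def
  proof (intro allI)
    fix l m
    let ?F = "triple_lincomb emb l m (scale_triple c (grad3 dx dy dz a)) (grad3 dx dy dz b)"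
    have "curlc ?F = 0" using d by (simp add: curl_lin jac_det_def)
    then show "\<exists>P. is_poisson_bracket emb P \<and> P y z = fst ?F \<and> P z x = fst (snd ?F) \<and> P x y = snd (snd ?F)"
      using br_poisson br_vals by blast
  qed
qed

end



lemma der_Adx: "is_der A_dx" unfolding A_dx_def by (intro der_map_poly der_pderiv)
lemma der_Ady: "is_der A_dy" unfolding A_dy_def by (intro der_map_poly der_pderiv)
lemma der_Adz: "is_der A_dz" unfolding A_dz_def by (rule der_pderiv)

lemma A_comm_xy: "A_dy (A_dx a) = A_dx (A_dy a)"
proof -
  have "A_dy (A_dx a) = map_poly (pderiv \<circ> map_poly pderiv) a"
    unfolding A_dx_def A_dy_def by (rule map_poly_map_poly) simp_all
  also have "pderiv \<circ> map_poly pderiv = map_poly pderiv \<circ> (pderiv :: complex poly poly \<Rightarrow> _)"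
    by (rule ext) (simp add: pderiv_map_poly[OF der_pderiv])
  also have "map_poly \<dots> a = A_dx (A_dy a)"
    unfolding A_dx_def A_dy_def by (rule map_poly_map_poly[symmetric]) simp_all
  finally show ?thesis .
qed
lemma A_comm_xz: "A_dz (A_dx a) = A_dx (A_dz a)"
  unfolding A_dx_def A_dz_def by (rule pderiv_map_poly[OF der_map_poly[OF der_pderiv]])
lemma A_comm_yz: "A_dz (A_dy a) = A_dy (A_dz a)"
  unfolding A_dy_def A_dz_def by (rule pderiv_map_poly[OF der_pderiv])

lemma A_const_add: "A_const (a + b) = A_const a + A_const b" by (simp add: A_const_def)
lemma A_const_mult: "A_const (a * b) = A_const a * A_const b" by (simp add: A_const_def)
lemma A_const_one: "A_const 1 = 1" by (simp add: A_const_def one_pCons)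

lemma A_vals:
  "A_dx A_x = 1" "A_dx A_y = 0" "A_dx A_z = 0"
  "A_dy A_x = 0" "A_dy A_y = 1" "A_dy A_z = 0"
  "A_dz A_x = 0" "A_dz A_y = 0" "A_dz A_z = 1"
  "A_dx (A_const k) = 0" "A_dy (A_const k) = 0" "A_dz (A_const k) = 0"
  by (simp_all add: A_dx_def A_dy_def A_dz_def A_x_def A_y_def A_z_def A_const_def map_poly_pCons pderiv_pCons one_pCons)

lemma kill_gen:
  fixes E :: "'b::comm_ring_1 \<Rightarrow> 'b" and i :: "polyA \<Rightarrow> 'b"
  assumes add: "\<And>a b. E (a + b) = E a + E b" and hom: "\<And>k a. E (emb k * a) = emb k * E a"
    and leib: "\<And>a b. E (a * b) = a * E b + E a * b"
    and ex: "E (i A_x) = 0" and ey: "E (i A_y) = 0" and ez: "E (i A_z) = 0"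
    and iadd: "\<And>a b. i (a + b) = i a + i b" and imult: "\<And>a b. i (a * b) = i a * i b"
    and iconst: "\<And>k. i (A_const k) = emb k"
  shows "E (i p) = 0"
proof -
  have E1: "E 1 = 0" using leib[of 1 1] by simp
  have Ec: "E (i (A_const k)) = 0" for k using hom[of k 1] E1 iconst by simp
  have i0: "i 0 = 0" using iadd[of 0 0] by simp
  have E0: "E 0 = 0" using add[of 0 0] by simp
  have step: "E (i (s + t * w)) = 0" if "E (i s) = 0" "E (i t) = 0" "E (i w) = 0" for s t w
    using that by (simp add: iadd imult add leib)
  have L1: "E (i [:[:c:]:]) = 0" for c :: "complex poly"
  proof (induction c)
    case 0 then show ?case by (simp add: i0 E0)
  next
    case (pCons k c)
    have "[:[:pCons k c:]:] = A_const k + A_x * [:[:c:]:]"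
      by (simp add: A_const_def A_x_def)
    then show ?case using step[OF Ec ex pCons.IH] by simp
  qed
  have L2: "E (i [:c:]) = 0" for c :: "complex poly poly"
  proof (induction c)
    case 0 then show ?case by (simp add: i0 E0)
  next
    case (pCons k c)
    have "[:pCons k c:] = [:[:k:]:] + A_y * [:c:]"
      by (simp add: A_y_def)
    then show ?case using step[OF L1 ey pCons.IH] by simp
  qed
  show "E (i p) = 0"
  proof (induction p)
    case 0 then show ?case by (simp add: i0 E0)
  next
    case (pCons k c)
    have "pCons k c = [:k:] + A_z * c"
      by (simp add: A_z_def)
    then show ?case using step[OF L2 ez pCons.IH] by simp
  qed
qed

interpretation A: d3 A_const A_x A_y A_z A_dx A_dy A_dz
proof (unfold_locales)
  fix E :: "polyA \<Rightarrow> polyA" and f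
  assume "\<And>a b. E (a + b) = E a + E b" "\<And>k a. E (A_const k * a) = A_const k * E a"
    "\<And>a b. E (a * b) = a * E b + E a * b" "E A_x = 0" "E A_y = 0" "E A_z = 0"
  then show "E f = 0" using kill_gen[of E A_const id f] by simp
qed (simp_all add: A_const_add A_const_mult A_const_one der_add[OF der_Adx] der_add[OF der_Ady]
    der_add[OF der_Adz] der_mult[OF der_Adx] der_mult[OF der_Ady] der_mult[OF der_Adz] A_vals
    A_comm_xy A_comm_xz A_comm_yz)




lemma fd_eq:
  fixes d :: "'a::idom \<Rightarrow> 'a"
  assumes d: "is_der d" and m: "m \<noteq> 0"
  shows "fract_deriv d (Fract n m) = Fract (d n * m - n * d m) (m * m)"
  unfolding fract_deriv_def
proof (rule someI2)
  show "\<exists>n' m'. m' \<noteq> 0 \<and> Fract n m = Fract n' m' \<and> Fract (d n * m - n * d m) (m * m) = Fract (d n' * m' - n' * d m') (m' * m')"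
    using m by blast
next
  fix r assume "\<exists>n' m'. m' \<noteq> 0 \<and> Fract n m = Fract n' m' \<and> r = Fract (d n' * m' - n' * d m') (m' * m')"
  then obtain n' m' where m': "m' \<noteq> 0" and e: "Fract n m = Fract n' m'"
    and r: "r = Fract (d n' * m' - n' * d m') (m' * m')" by blast
  have e1: "n * m' = n' * m" using e m m' by (simp add: eq_fract)
  have e2: "d n * m' + n * d m' = d n' * m + n' * d m"
    using arg_cong[OF e1, of d] by (simp add: der_mult[OF d] algebra_simps)
  have "(d n' * m' - n' * d m') * (m * m) - (d n * m - n * d m) * (m' * m')
      = - (m * m') * ((d n * m' + n * d m') - (d n' * m + n' * d m)) + (d m * m' + d m' * m) * (n * m' - n' * m)"
    by (simp add: algebra_simps)
  also have "\<dots> = 0" using e1 e2 by simp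
  finally show "r = Fract (d n * m - n * d m) (m * m)"
    using r m m' by (simp add: eq_fract)
qed


lemma fd_add:
  fixes d :: "'a::idom \<Rightarrow> 'a"
  assumes d: "is_der d" and b: "b \<noteq> 0" and e: "e \<noteq> 0"
  shows "fract_deriv d (Fract a b + Fract c e) = fract_deriv d (Fract a b) + fract_deriv d (Fract c e)"
proof -
  have "fract_deriv d (Fract a b + Fract c e) = Fract (d (a * e + c * b) * (b * e) - (a * e + c * b) * d (b * e)) ((b * e) * (b * e))"
    using b e by (simp add: fd_eq[OF d])
  also have "d (a * e + c * b) * (b * e) - (a * e + c * b) * d (b * e) = (d a * b - a * d b) * (e * e) + (d c * e - c * d e) * (b * b)"
    by (simp add: der_add[OF d] der_mult[OF d] algebra_simps)
  also have "(b * e) * (b * e) = (b * b) * (e * e)" by (simp add: algebra_simps)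
  finally show ?thesis using b e by (simp add: fd_eq[OF d])
qed

lemma fd_mult:
  fixes d :: "'a::idom \<Rightarrow> 'a"
  assumes d: "is_der d" and b: "b \<noteq> 0" and e: "e \<noteq> 0"
  shows "fract_deriv d (Fract a b * Fract c e) = Fract a b * fract_deriv d (Fract c e) + fract_deriv d (Fract a b) * Fract c e"
proof -
  have "fract_deriv d (Fract a b * Fract c e) = Fract (d (a * c) * (b * e) - (a * c) * d (b * e)) ((b * e) * (b * e))"
    using b e by (simp add: fd_eq[OF d])
  also have "\<dots> = Fract ((b * e) * (d (a * c) * (b * e) - (a * c) * d (b * e))) ((b * e) * ((b * e) * (b * e)))"
    using b e by (intro mult_fract_cancel[symmetric]) simp
  also have "(b * e) * (d (a * c) * (b * e) - (a * c) * d (b * e)) = a * (d c * e - c * d e) * (b * b * e) + (d a * b - a * d b) * c * (b * (e * e))"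
    by (simp add: der_mult[OF d] algebra_simps)
  also have "(b * e) * ((b * e) * (b * e)) = (b * (e * e)) * (b * b * e)"
    by (simp add: algebra_simps)
  also have "Fract (a * (d c * e - c * d e) * (b * b * e) + (d a * b - a * d b) * c * (b * (e * e))) ((b * (e * e)) * (b * b * e))
     = Fract a b * fract_deriv d (Fract c e) + fract_deriv d (Fract a b) * Fract c e"
    using b e by (simp add: fd_eq[OF d])
  finally show ?thesis .
qed


lemma der_fd:
  fixes d :: "'a::idom \<Rightarrow> 'a"
  assumes d: "is_der d" shows "is_der (fract_deriv d)"
  unfolding is_der_def
proof (intro conjI allI)
  fix p q :: "'a fract"
  show "fract_deriv d (p + q) = fract_deriv d p + fract_deriv d q"
    by (cases p; cases q) (clarify, rule fd_add[OF d], assumption+)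
  show "fract_deriv d (p * q) = p * fract_deriv d q + fract_deriv d p * q"
    by (cases p; cases q) (clarify, rule fd_mult[OF d], assumption+)
qed

lemma fd_comm:
  fixes d1 d2 :: "'a::idom \<Rightarrow> 'a"
  assumes d1: "is_der d1" and d2: "is_der d2" and c: "\<And>a. d1 (d2 a) = d2 (d1 a)"
  shows "fract_deriv d1 (fract_deriv d2 q) = fract_deriv d2 (fract_deriv d1 q)"
proof (cases q)
  fix a b assume q: "q = Fract a b" and b: "b \<noteq> 0"
  have bb: "b * b \<noteq> 0" using b by simp
  have "d1 (d2 a * b - a * d2 b) * (b * b) - (d2 a * b - a * d2 b) * d1 (b * b)
      = d2 (d1 a * b - a * d1 b) * (b * b) - (d1 a * b - a * d1 b) * d2 (b * b)"
    by (simp add: der_mult[OF d1] der_diff[OF d1] der_mult[OF d2] der_diff[OF d2] c algebra_simps)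
  then show ?thesis using q b bb by (simp add: fd_eq[OF d1] fd_eq[OF d2])
qed

lemma fd_one: "is_der d \<Longrightarrow> fract_deriv d (Fract a 1) = Fract (d a) 1"
  by (simp add: fd_eq der_1)

lemma Q_vals:
  "Q_dx Q_x = 1" "Q_dx Q_y = 0" "Q_dx Q_z = 0"
  "Q_dy Q_x = 0" "Q_dy Q_y = 1" "Q_dy Q_z = 0"
  "Q_dz Q_x = 0" "Q_dz Q_y = 0" "Q_dz Q_z = 1"
  "Q_dx (Q_const k) = 0" "Q_dy (Q_const k) = 0" "Q_dz (Q_const k) = 0"
  by (simp_all add: Q_dx_def Q_dy_def Q_dz_def Q_x_def Q_y_def Q_z_def Q_const_def
      fd_one der_Adx der_Ady der_Adz A_vals One_fract_def Zero_fract_def)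

lemma der_Qx: "is_der Q_dx" unfolding Q_dx_def by (rule der_fd[OF der_Adx])
lemma der_Qy: "is_der Q_dy" unfolding Q_dy_def by (rule der_fd[OF der_Ady])
lemma der_Qz: "is_der Q_dz" unfolding Q_dz_def by (rule der_fd[OF der_Adz])
lemma Q_comm_xy: "Q_dy (Q_dx a) = Q_dx (Q_dy a)"
  unfolding Q_dx_def Q_dy_def by (rule fd_comm[OF der_Ady der_Adx A_comm_xy])
lemma Q_comm_xz: "Q_dz (Q_dx a) = Q_dx (Q_dz a)"
  unfolding Q_dx_def Q_dz_def by (rule fd_comm[OF der_Adz der_Adx A_comm_xz])
lemma Q_comm_yz: "Q_dz (Q_dy a) = Q_dy (Q_dz a)"
  unfolding Q_dz_def Q_dy_def by (rule fd_comm[OF der_Adz der_Ady A_comm_yz])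

lemma Q_const_add: "Q_const (a + b) = Q_const a + Q_const b"
  by (simp add: Q_const_def A_const_add)
lemma Q_const_mult: "Q_const (a * b) = Q_const a * Q_const b"
  by (simp add: Q_const_def A_const_mult)
lemma Q_const_one: "Q_const 1 = 1"
  by (simp add: Q_const_def A_const_one One_fract_def)

lemma kill_Q:
  fixes E :: "fracA \<Rightarrow> fracA"
  assumes add: "\<And>a b. E (a + b) = E a + E b" and hom: "\<And>k a. E (Q_const k * a) = Q_const k * E a"
    and leib: "\<And>a b. E (a * b) = a * E b + E a * b" and ex: "E Q_x = 0" and ey: "E Q_y = 0" and ez: "E Q_z = 0"
  shows "E f = 0"
proof -
  have poly: "E (Fract p 1) = 0" for p
  proof (rule kill_gen[of E Q_const "\<lambda>n. Fract n 1"])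
    show "E (Fract A_x 1) = 0" using ex by (simp add: Q_x_def)
    show "E (Fract A_y 1) = 0" using ey by (simp add: Q_y_def)
    show "E (Fract A_z 1) = 0" using ez by (simp add: Q_z_def)
    show "\<And>k. Fract (A_const k) 1 = Q_const k" by (simp add: Q_const_def)
  qed (rule add hom leib | simp)+
  show "E f = 0"
  proof (cases f)
    fix n m assume f: "f = Fract n m" "m \<noteq> 0"
    have "Fract n 1 = f * Fract m 1" using f by (simp add: eq_fract)
    then have "0 = f * E (Fract m 1) + E f * Fract m 1" using poly[of n] leib by metis
    then have "E f * Fract m 1 = 0" using poly[of m] by simp
    moreover have "Fract m 1 \<noteq> 0" using f by (simp add: Zero_fract_def eq_fract)
    ultimately show ?thesis by simp
  qed
qed

interpretation Q: d3 Q_const Q_x Q_y Q_z Q_dx Q_dy Q_dz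
proof (unfold_locales)
  fix E :: "fracA \<Rightarrow> fracA" and f
  assume "\<And>a b. E (a + b) = E a + E b" "\<And>k a. E (Q_const k * a) = Q_const k * E a"
    "\<And>a b. E (a * b) = a * E b + E a * b" "E Q_x = 0" "E Q_y = 0" "E Q_z = 0"
  then show "E f = 0" by (rule kill_Q)
qed (simp_all add: Q_const_add Q_const_mult Q_const_one
    der_add[OF der_Qx] der_add[OF der_Qy] der_add[OF der_Qz] der_mult[OF der_Qx] der_mult[OF der_Qy]
    der_mult[OF der_Qz] Q_vals Q_comm_xy Q_comm_xz Q_comm_yz)




lemma S_dx_eq: "S_dx = fmap (fmap fps_deriv)" by (rule ext) (simp add: S_dx_def fmap_def)
lemma S_dy_eq: "S_dy = fmap fps_deriv" by (rule ext) (simp add: S_dy_def fmap_def)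

lemma der_Sx: "is_der S_dx" unfolding S_dx_eq by (intro der_fmap der_fps_deriv)
lemma der_Sy: "is_der S_dy" unfolding S_dy_eq by (intro der_fmap der_fps_deriv)
lemma der_Sz: "is_der S_dz" unfolding S_dz_def by (rule der_fps_deriv)

lemma S_comm_xy: "S_dy (S_dx a) = S_dx (S_dy a)"
  unfolding S_dx_eq S_dy_eq fmap_fmap
  by (rule arg_cong[of _ _ "\<lambda>g. fmap g a"]) (rule ext, simp add: fps_deriv_fmap[OF der_fps_deriv])
lemma S_comm_xz: "S_dz (S_dx a) = S_dx (S_dz a)"
  unfolding S_dx_eq S_dz_def by (rule fps_deriv_fmap[OF der_fmap[OF der_fps_deriv]])
lemma S_comm_yz: "S_dz (S_dy a) = S_dy (S_dz a)"
  unfolding S_dy_eq S_dz_def by (rule fps_deriv_fmap[OF der_fps_deriv])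

lemmas fsimps = fmap_const[OF der_fps_deriv] fmap_const[OF der_fmap[OF der_fps_deriv]]
  fmap_X[OF der_fps_deriv] fmap_X[OF der_fmap[OF der_fps_deriv]]
  der_add[OF der_fmap[OF der_fps_deriv]] der_add[OF der_fmap[OF der_fmap[OF der_fps_deriv]]]

lemma S_vals:
  "S_dx (S_x p) = 1" "S_dx (S_y q) = 0" "S_dx (S_z r) = 0"
  "S_dy (S_x p) = 0" "S_dy (S_y q) = 1" "S_dy (S_z r) = 0"
  "S_dz (S_x p) = 0" "S_dz (S_y q) = 0" "S_dz (S_z r) = 1"
  "S_dx (S_const k) = 0" "S_dy (S_const k) = 0" "S_dz (S_const k) = 0"
  by (simp_all add: S_dx_eq S_dy_eq S_dz_def S_x_def S_y_def S_z_def S_const_def fsimps)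

lemma S_const_add: "S_const (a + b) = S_const a + S_const b" by (simp add: S_const_def)
lemma S_const_mult: "S_const (a * b) = S_const a * S_const b" by (simp add: S_const_def)
lemma S_const_one: "S_const 1 = 1" by (simp add: S_const_def)

lemma tower:
  fixes E :: "'b::comm_ring_1 \<Rightarrow> 'b" and h :: "'r \<Rightarrow> 'b" and k :: "'s \<Rightarrow> 'b"
  assumes add: "\<And>a b. E (a + b) = E a + E b" and leib: "\<And>a b. E (a * b) = a * E b + E a * b"
    and Et: "E t = 0" and dec: "\<And>r. \<exists>r0 r1. h r = k r0 + t * h r1" and kk: "\<And>r0. E (k r0) = 0"
  shows "\<exists>w. E (h r) = t ^ n * w"
proof (induction n arbitrary: r)
  case 0 then show ?case by simp
next
  case (Suc n)
  obtain r0 r1 where "h r = k r0 + t * h r1" using dec by blast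
  then have "E (h r) = t * E (h r1)" using add leib kk Et by simp
  moreover obtain w where "E (h r1) = t ^ n * w" using Suc.IH by blast
  ultimately show ?case by (metis mult.assoc power_Suc)
qed

lemma fps_dec: "(f :: 'a::comm_ring_1 fps) = fps_const (f $ 0) + fps_X * Abs_fps (\<lambda>n. f $ Suc n)"
  by (intro fps_ext) (simp add: fps_X_mult_nth)

lemma zX: fixes v :: "'a::comm_ring_1 fps fps fps"
  assumes "\<And>n. \<exists>w. v = fps_const (fps_const fps_X) ^ n * w" shows "v = 0"
proof -
  have c: "v $ i $ j $ l = 0" for i j l
  proof -
    obtain w where "v = fps_const (fps_const fps_X) ^ Suc l * w" using assms by blast
    then show ?thesis by (simp add: fps_X_power_mult_nth del: power_Suc)
  qed
  show ?thesis by (intro fps_ext) (simp add: c)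
qed

lemma zY: fixes v :: "'a::comm_ring_1 fps fps fps"
  assumes "\<And>n. \<exists>w. v = fps_const fps_X ^ n * w" shows "v = 0"
proof -
  have c: "v $ i $ j = 0" for i j
  proof -
    obtain w where "v = fps_const fps_X ^ Suc j * w" using assms by blast
    then show ?thesis by (simp add: fps_X_power_mult_nth del: power_Suc)
  qed
  show ?thesis by (intro fps_ext) (simp add: c)
qed

lemma zZ: fixes v :: "'a::comm_ring_1 fps"
  assumes "\<And>n. \<exists>w. v = fps_X ^ n * w" shows "v = 0"
proof -
  have c: "v $ i = 0" for i
  proof -
    obtain w where "v = fps_X ^ Suc i * w" using assms by blast
    then show ?thesis by (simp add: fps_X_power_mult_nth del: power_Suc)
  qed
  show ?thesis by (intro fps_ext) (simp add: c)
qed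

lemma kill_S:
  fixes E :: "serA \<Rightarrow> serA"
  assumes add: "\<And>a b. E (a + b) = E a + E b" and hom: "\<And>k a. E (S_const k * a) = S_const k * E a"
    and leib: "\<And>a b. E (a * b) = a * E b + E a * b" and ex: "E (S_x p) = 0" and ey: "E (S_y q) = 0"
    and ez: "E (S_z r) = 0"
  shows "E f = 0"
proof -
  have E1: "E 1 = 0" using leib[of 1 1] by simp
  have Ec: "E (S_const c) = 0" for c using hom[of c 1] E1 by simp
  have "S_x p = S_const p + fps_const (fps_const fps_X)" by (simp add: S_x_def S_const_def)
  then have EX: "E (fps_const (fps_const fps_X)) = 0" using ex Ec add by simp
  have "S_y q = S_const q + fps_const fps_X" by (simp add: S_y_def S_const_def)
  then have EY: "E (fps_const fps_X) = 0" using ey Ec add by simp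
  have "S_z r = S_const r + fps_X" by (simp add: S_z_def)
  then have EZ: "E fps_X = 0" using ez Ec add by simp
  have L1: "E (fps_const (fps_const c)) = 0" for c :: "complex fps"
  proof (rule zX)
    fix n
    show "\<exists>w. E (fps_const (fps_const c)) = fps_const (fps_const fps_X) ^ n * w"
    proof (rule tower[of E "fps_const (fps_const fps_X)" "\<lambda>c. fps_const (fps_const c)" S_const])
      fix r :: "complex fps"
      have "fps_const (fps_const r) = fps_const (fps_const (fps_const (r $ 0) + fps_X * Abs_fps (\<lambda>n. r $ Suc n)))"
        by (subst fps_dec[of r]) (rule refl)
      then have "fps_const (fps_const r) = S_const (r $ 0) + fps_const (fps_const fps_X) * fps_const (fps_const (Abs_fps (\<lambda>n. r $ Suc n)))"
        by (simp add: S_const_def)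
      then show "\<exists>r0 r1. fps_const (fps_const r) = S_const r0 + fps_const (fps_const fps_X) * fps_const (fps_const r1)"
        by blast
    qed (simp_all add: add leib EX Ec)
  qed
  have L2: "E (fps_const c) = 0" for c :: "complex fps fps"
  proof (rule zY)
    fix n
    show "\<exists>w. E (fps_const c) = fps_const fps_X ^ n * w"
    proof (rule tower[of E "fps_const fps_X" "\<lambda>c. fps_const c" "\<lambda>c. fps_const (fps_const c)"])
      fix r :: "complex fps fps"
      have "fps_const r = fps_const (fps_const (r $ 0) + fps_X * Abs_fps (\<lambda>n. r $ Suc n))"
        by (subst fps_dec[of r]) (rule refl)
      then have "fps_const r = fps_const (fps_const (r $ 0)) + fps_const fps_X * fps_const (Abs_fps (\<lambda>n. r $ Suc n))"
        by simp
      then show "\<exists>r0 r1. fps_const r = fps_const (fps_const r0) + fps_const fps_X * fps_const r1"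
        by blast
    qed (simp_all add: add leib EY L1)
  qed
  show "E f = 0"
  proof (rule zZ)
    fix n
    show "\<exists>w. E f = fps_X ^ n * w"
    proof (rule tower[of E "fps_X" "\<lambda>c. c" "\<lambda>c. fps_const c"])
      fix r :: serA
      show "\<exists>r0 r1. r = fps_const r0 + fps_X * r1" using fps_dec[of r] by blast
    qed (simp_all add: add leib EZ L2)
  qed
qed


lemma S_d3: "d3 S_const (S_x p) (S_y q) (S_z r) S_dx S_dy S_dz"
proof (unfold_locales)
  fix E :: "serA \<Rightarrow> serA" and f
  assume "\<And>a b. E (a + b) = E a + E b" "\<And>k a. E (S_const k * a) = S_const k * E a"
    "\<And>a b. E (a * b) = a * E b + E a * b" "E (S_x p) = 0" "E (S_y q) = 0" "E (S_z r) = 0"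
  then show "E f = 0" by (rule kill_S)
qed (simp_all add: S_const_add S_const_mult S_const_one
    der_add[OF der_Sx] der_add[OF der_Sy] der_add[OF der_Sz] der_mult[OF der_Sx] der_mult[OF der_Sy]
    der_mult[OF der_Sz] S_vals S_comm_xy S_comm_xz S_comm_yz)

theorem corollary1p22:
  shows "(\<forall>a b c :: polyA.
            compatible_triples A_const A_x A_y A_z
              (scale_triple c (grad3 A_dx A_dy A_dz a)) (grad3 A_dx A_dy A_dz b)
            \<longleftrightarrow> jac_det A_dx A_dy A_dz a b c = 0)
       \<and> (\<forall>a b c :: fracA.
            compatible_triples Q_const Q_x Q_y Q_z
              (scale_triple c (grad3 Q_dx Q_dy Q_dz a)) (grad3 Q_dx Q_dy Q_dz b)
            \<longleftrightarrow> jac_det Q_dx Q_dy Q_dz a b c = 0)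
       \<and> (\<forall>(p::complex) (q::complex) (r::complex) (a::serA) b c.
            compatible_triples S_const (S_x p) (S_y q) (S_z r)
              (scale_triple c (grad3 S_dx S_dy S_dz a)) (grad3 S_dx S_dy S_dz b)
            \<longleftrightarrow> jac_det S_dx S_dy S_dz a b c = 0)"
  using A.main Q.main d3.main[OF S_d3] by blast


end
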